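(* Let $N\ge 3$ be even, $K>0$ and $0<P\le 2K$. Consider the equations for phase differences $\theta_1,\dots,\theta_N$ of a ring network with homogeneous power distribution $P_i=(-1)^{i+1}P$: \[ \sin\theta_i-\sin\theta_{i+1}=\frac{P_i}{K}\quad (i=1,\dots,N,\ \theta_{N+1}=\theta_1),\qquad \sum_{i=1}^N\theta_i=2m\pi\ \text{ for some } m\in\{-\lfloor N/2\rfloor,\dots,\lfloor N/2\rfloor\}. \] The total number of stable equilibria, i.e. solutions with all $\theta_i\in[-\pi/2,\pi/2]$, is \[ N_s=1+2\Big\lfloor \frac{N}{2\pi}\arccos\Big(\sqrt{\frac{P}{2K}}\Big)\Big\rfloor . \]
   Context: These equations describe the equilibria $(\boldsymbol\delta,\mathbf 0)$ of the ring swing-equation system $\ddot\delta_i+\alpha\dot\delta_i+K[\sin(\delta_i-\delta_{i+1})+\sin(\delta_i-\delta_{i-1})]=P_i$ (indices mod $N$) in terms of the phase differences $\theta_1=\delta_1-\delta_N$, $\theta_i=\delta_i-\delta_{i-1}$ (mod $2\pi$). $\lfloor x\rfloor$ denotes the largest integer not exceeding $x$. *)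

theory Defs
  imports Complex_Main
begin

text \<open>Phase differences theta_1..theta_N are represented as a real list of length N,
  theta_i = th ! (i-1). Power injections P_i = (-1)^(i+1) P.\<close>

definition ring_equilibrium :: "nat \<Rightarrow> real \<Rightarrow> real \<Rightarrow> real list \<Rightarrow> bool" where
  "ring_equilibrium N K P th \<longleftrightarrow>
     length th = N \<and>
     (\<forall>i\<in>{1..N}. sin (th ! (i - 1)) - sin (th ! (i mod N))
                    = ((-1) ^ (i + 1) * P) / K) \<and>
     (\<exists>m::int. - \<lfloor>real N / 2\<rfloor> \<le> m \<and> m \<le> \<lfloor>real N / 2\<rfloor> \<and>
               sum_list th = 2 * real_of_int m * pi)"

definition stable_equilibria :: "nat \<Rightarrow> real \<Rightarrow> real \<Rightarrow> real list set" where
  "stable_equilibria N K P =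
     {th. ring_equilibrium N K P th \<and> (\<forall>x\<in>set th. - (pi / 2) \<le> x \<and> x \<le> pi / 2)}"

end

theory Submission imports Defs begin

lemma trig1: "sin (u+v) - sin (u-v) = 2 * cos u * sin (v::real)"
  by (simp add: sin_add sin_diff)

lemma lemA:
  fixes a b p :: real
  assumes p: "p > 0" and a: "-(pi/2) \<le> a" "a \<le> pi/2" and b: "-(pi/2) \<le> b" "b \<le> pi/2"
    and eq: "sin a - sin b = p"
  shows "sqrt (p/2) \<le> cos ((a+b)/2) \<and> a = (a+b)/2 + arcsin (p/(2*cos ((a+b)/2)))
         \<and> b = (a+b)/2 - arcsin (p/(2*cos ((a+b)/2)))"
proof -
  define u where "u = (a+b)/2"
  define v where "v = (a-b)/2"
  have ab1: "a = u+v" unfolding u_def v_def by (simp add: add_divide_distrib[symmetric])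
  have ab2: "b = u-v" unfolding u_def v_def by (simp add: diff_divide_distrib[symmetric])
  note ab = ab1 ab2
  have uv: "\<bar>u\<bar> + \<bar>v\<bar> \<le> pi/2" using a b ab by (auto simp: abs_if)
  have p2: "p = 2 * cos u * sin v" using eq ab trig1 by simp
  have cu: "cos u \<ge> 0" using uv by (intro cos_ge_zero) auto
  have cu': "cos u > 0" using p2 p cu by (cases "cos u = 0") auto
  have sv: "sin v = p/(2*cos u)" using p2 cu' by (simp add: algebra_simps)
  have vv: "v = arcsin (p/(2*cos u))" using sv uv
    by (metis arcsin_sin abs_le_iff le_add_same_cancel2 abs_ge_zero
        minus_le_iff order_trans)
  have "sin v \<le> sin (pi/2 - \<bar>u\<bar>)"
    using uv by (intro sin_monotone_2pi_le) auto
  also have "\<dots> = cos u" by (simp add: sin_cos_eq cos_abs_real)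
  finally have "sin v \<le> cos u" .
  hence "p \<le> 2 * cos u * cos u" using p2 cu by (simp add: mult_left_mono)
  hence "p/2 \<le> (cos u)^2" by (simp add: power2_eq_square)
  hence "sqrt (p/2) \<le> sqrt ((cos u)^2)" by (rule real_sqrt_le_mono)
  also have "\<dots> = cos u" using cu by simp
  finally have "sqrt (p/2) \<le> cos u" .
  thus ?thesis using ab vv unfolding u_def[symmetric] by simp
qed

lemma lemB:
  fixes u p :: real
  assumes p: "p > 0" and u: "\<bar>u\<bar> \<le> pi/2" and c: "sqrt (p/2) \<le> cos u"
  defines "v \<equiv> arcsin (p/(2*cos u))"
  shows "-(pi/2) \<le> u+v \<and> u+v \<le> pi/2 \<and> -(pi/2) \<le> u-v \<and> u-v \<le> pi/2
     \<and> sin (u+v) - sin (u-v) = p"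
proof -
  have cu: "cos u > 0" using p c by (meson less_le_trans real_sqrt_gt_zero half_gt_zero)
  have "p/2 \<le> (cos u)^2" using c
    by (metis cu less_imp_le p half_gt_zero less_imp_le power2_le_imp_le real_sqrt_pow2 sqrt_le_D)
  hence pq: "p/(2*cos u) \<le> cos u" using cu by (simp add: field_simps power2_eq_square)
  have q0: "0 < p/(2*cos u)" using cu p by simp
  have c1: "cos u \<le> 1" by simp
  have q1: "p/(2*cos u) \<le> 1" using pq c1 by linarith
  have sv: "sin v = p/(2*cos u)" unfolding v_def using q0 pq c1 by (intro sin_arcsin) linarith+
  have v0: "0 \<le> v" unfolding v_def proof -
    have "p/(2*cos u) \<le> 1" using pq c1 by linarith
    thus "0 \<le> arcsin (p/(2*cos u))" using q0 arcsin_le_arcsin[of 0 "p/(2*cos u)"] by simp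
  qed
  have "v \<le> pi/2 - \<bar>u\<bar>" unfolding v_def
  proof (subst arcsin_le_iff)
    show "p / (2 * cos u) \<le> sin (pi / 2 - \<bar>u\<bar>)" using pq by (simp add: sin_cos_eq cos_abs_real)
  qed (use q0 q1 u pi_gt_zero in linarith)+
  hence "-(pi/2) \<le> u+v \<and> u+v \<le> pi/2 \<and> -(pi/2) \<le> u-v \<and> u-v \<le> pi/2"
    using v0 by (auto simp: abs_if split: if_splits)
  moreover have "sin (u+v) - sin (u-v) = p" using trig1 sv cu by simp
  ultimately show ?thesis by blast
qed

lemma lemC:
  fixes u y :: real
  assumes u: "\<bar>u\<bar> \<le> pi" and y: "0 \<le> y" "y \<le> 1"
  shows "y \<le> cos u \<longleftrightarrow> \<bar>u\<bar> \<le> arccos y"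
proof -
  have "y \<le> cos u \<longleftrightarrow> cos (arccos y) \<le> cos \<bar>u\<bar>" using y by (simp add: cos_arccos)
  also have "\<dots> \<longleftrightarrow> \<bar>u\<bar> \<le> arccos y"
    using u y arccos_bounded[of y] by (intro cos_mono_le_eq) auto
  finally show ?thesis .
qed

lemma lemE:
  assumes "even N"
  shows "sum_list (map (\<lambda>k. if even k then a else b) [0..<N]) = real N / 2 * (a + b)"
proof -
  obtain n where N: "N = 2*n" using assms by blast
  have "sum_list (map (\<lambda>k. if even k then a else b) [0..<2*n]) = real n * (a + b)"
    by (induction n) (auto simp: algebra_simps)
  thus ?thesis using N by simp
qed


lemma sin_inj_half:
  fixes x y :: real
  assumes "-(pi/2) \<le> x" "x \<le> pi/2" "-(pi/2) \<le> y" "y \<le> pi/2" "sin x = sin y"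
  shows "x = y"
  by (metis assms arcsin_sin)

lemma lemD:
  assumes eq: "ring_equilibrium N K P th" and rng: "\<forall>x\<in>set th. -(pi/2) \<le> x \<and> x \<le> pi/2"
    and N: "N \<ge> 3"
  shows "th = map (\<lambda>k. if even k then th!0 else th!1) [0..<N] \<and> sin (th!0) - sin (th!1) = P/K"
proof -
  have len: "length th = N" using eq by (simp add: ring_equilibrium_def)
  have eqs: "\<And>i. 1 \<le> i \<Longrightarrow> i \<le> N \<Longrightarrow> sin (th ! (i - 1)) - sin (th ! (i mod N))
                    = ((-1) ^ (i + 1) * P) / K"
    using eq by (auto simp: ring_equilibrium_def)
  have e1: "sin (th!0) - sin (th!1) = P/K" using eqs[of 1] N by simp
  have s: "sin (th!k) = (if even k then sin (th!0) else sin (th!1))" if "k < N" for k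
    using that
  proof (induction k)
    case 0 then show ?case by simp
  next
    case (Suc k)
    have "Suc k mod N = Suc k" using Suc.prems by simp
    hence e: "sin (th!k) - sin (th!(Suc k)) = ((-1) ^ (Suc k + 1) * P) / K"
      using eqs[of "Suc k"] Suc.prems by simp
    have ih: "sin (th!k) = (if even k then sin (th!0) else sin (th!1))" using Suc by simp
    show ?case
    proof (cases "even k")
      case True then show ?thesis using e ih e1 by simp
    next
      case False then show ?thesis using e ih e1 by simp
    qed
  qed
  have r: "-(pi/2) \<le> th!k \<and> th!k \<le> pi/2" if "k < N" for k
    using rng nth_mem[of k th] that len by auto
  have "th = map (\<lambda>k. if even k then th!0 else th!1) [0..<N]"
  proof (rule nth_equalityI)
    show "length th = length (map (\<lambda>k. if even k then th!0 else th!1) [0..<N])" using len by simp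
  next
    fix k assume k: "k < length th"
    have "th!k = (if even k then th!0 else th!1)"
      using sin_inj_half[of "th!k" "if even k then th!0 else th!1"] r[of k] r[of 0] r[of 1] s[of k] k len N
      by (cases "even k") auto
    thus "th ! k = map (\<lambda>k. if even k then th!0 else th!1) [0..<N] ! k" using k len by simp
  qed
  thus ?thesis using e1 by simp
qed

theorem proposition1:
  fixes N :: nat and K P :: real
  assumes "N \<ge> 3" and "even N" and "K > 0" and "0 < P" and "P \<le> 2 * K"
  shows "finite (stable_equilibria N K P) \<and>
         int (card (stable_equilibria N K P))
           = 1 + 2 * \<lfloor>real N / (2 * pi) * arccos (sqrt (P / (2 * K)))\<rfloor>"
proof -
  define p where "p = P / K"
  have p0: "p > 0" and p2: "p \<le> 2" using assms by (auto simp: p_def field_simps)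
  have pk: "P / (2*K) = p/2" by (simp add: p_def)
  define y where "y = sqrt (p/2)"
  have y: "0 \<le> y" "y \<le> 1" using p0 p2 by (auto simp: y_def)
  define phi where "phi = arccos y"
  have phi: "0 \<le> phi" "phi \<le> pi/2" using y arccos_le_pi2 arccos_lbound by (auto simp: phi_def)
  define L where "L = \<lfloor>real N / (2 * pi) * phi\<rfloor>"
  have L0: "0 \<le> L" using phi by (simp add: L_def)
  have Npos: "real N > 0" using assms by simp
  define w where "w = (\<lambda>m::int. 2 * real_of_int m * pi / real N)"
  have wL: "\<bar>w m\<bar> \<le> phi \<longleftrightarrow> m \<in> {-L..L}" for m
  proof -
    have "\<bar>w m\<bar> \<le> phi \<longleftrightarrow> \<bar>real_of_int m\<bar> \<le> real N / (2 * pi) * phi"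
      using Npos pi_gt_zero by (simp add: w_def abs_mult abs_divide field_simps)
    also have "\<dots> \<longleftrightarrow> \<bar>m\<bar> \<le> L" unfolding L_def by (metis le_floor_iff of_int_abs)
    finally show ?thesis by auto
  qed
  define mk where "mk = (\<lambda>m. map (\<lambda>k. if even k then w m + arcsin (p/(2*cos (w m)))
                                        else w m - arcsin (p/(2*cos (w m)))) [0..<N])"
  have inj: "inj_on mk {-L..L}"
  proof
    fix m1 m2 assume "m1 \<in> {-L..L}" "m2 \<in> {-L..L}" "mk m1 = mk m2"
    hence "mk m1 ! 0 + mk m1 ! 1 = mk m2 ! 0 + mk m2 ! 1" by simp
    hence "w m1 = w m2" using assms(1) by (simp add: mk_def)
    thus "m1 = m2" using Npos by (simp add: w_def)
  qed
  have S: "stable_equilibria N K P = mk ` {-L..L}"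
  proof
    show "stable_equilibria N K P \<subseteq> mk ` {-L..L}"
    proof
      fix th assume "th \<in> stable_equilibria N K P"
      hence eq: "ring_equilibrium N K P th" and rng: "\<forall>x\<in>set th. -(pi/2) \<le> x \<and> x \<le> pi/2"
        by (auto simp: stable_equilibria_def)
      have len: "length th = N" using eq by (simp add: ring_equilibrium_def)
      obtain m :: int where m: "sum_list th = 2 * real_of_int m * pi"
        using eq by (auto simp: ring_equilibrium_def)
      have D: "th = map (\<lambda>k. if even k then th!0 else th!1) [0..<N]" "sin (th!0) - sin (th!1) = p"
        using lemD[OF eq rng assms(1)] by (auto simp: p_def)
      have r0: "-(pi/2) \<le> th!0 \<and> th!0 \<le> pi/2" using rng len assms(1) by auto
      have r1: "-(pi/2) \<le> th!1 \<and> th!1 \<le> pi/2" using rng len assms(1) by auto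
      define u where "u = (th!0 + th!1)/2"
      have A: "sqrt (p/2) \<le> cos u" "th!0 = u + arcsin (p/(2*cos u))" "th!1 = u - arcsin (p/(2*cos u))"
        using lemA[OF p0 _ _ _ _ D(2)] r0 r1 unfolding u_def by auto
      have "sum_list th = real N / 2 * (th!0 + th!1)"
        by (subst D(1)) (rule lemE[OF assms(2)])
      hence "real N * u = 2 * real_of_int m * pi" using m by (simp add: u_def)
      hence uw: "u = w m" using Npos by (simp add: w_def field_simps)
      have ub: "\<bar>u\<bar> \<le> pi/2" using r0 r1 by (simp add: u_def abs_le_iff)
      have "\<bar>u\<bar> \<le> phi" using lemC[of u y] ub y A(1) pi_gt_zero unfolding phi_def y_def by simp
      hence mL: "m \<in> {-L..L}" using wL uw by simp
      have "th = map (\<lambda>k. if even k then th!0 else th!1) [0..<N]" by (rule D(1))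
      also have "\<dots> = mk m" unfolding A(2,3) by (simp add: mk_def uw)
      finally have "th = mk m" .
      thus "th \<in> mk ` {-L..L}" using mL by blast
    qed
  next
    show "mk ` {-L..L} \<subseteq> stable_equilibria N K P"
    proof
      fix th assume "th \<in> mk ` {-L..L}"
      then obtain m where mL: "m \<in> {-L..L}" and th: "th = mk m" by blast
      define u where "u = w m"
      define a where "a = u + arcsin (p/(2*cos u))"
      define b where "b = u - arcsin (p/(2*cos u))"
      have uphi: "\<bar>u\<bar> \<le> phi" using wL mL by (simp add: u_def)
      have ub: "\<bar>u\<bar> \<le> pi/2" using uphi phi by simp
      have cu: "sqrt (p/2) \<le> cos u" using lemC[of u y] ub y uphi pi_gt_zero
        unfolding phi_def y_def by simp
      have B: "-(pi/2) \<le> a \<and> a \<le> pi/2 \<and> -(pi/2) \<le> b \<and> b \<le> pi/2 \<and> sin a - sin b = p"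
        using lemB[OF p0 ub cu] unfolding a_def b_def by blast
      have th': "th = map (\<lambda>k. if even k then a else b) [0..<N]"
        by (simp add: th mk_def a_def b_def u_def)
      have len: "length th = N" using th' by simp
      have eqs: "\<forall>i\<in>{1..N}. sin (th ! (i - 1)) - sin (th ! (i mod N))
                    = ((-1) ^ (i + 1) * P) / K"
      proof
        fix i assume i: "i \<in> {1..N}"
        show "sin (th ! (i - 1)) - sin (th ! (i mod N)) = ((-1) ^ (i + 1) * P) / K"
        proof (cases "i = N")
          case True
          then show ?thesis using th' assms(1,2) B i by (simp add: p_def)
        next
          case False
          hence iN: "i < N" using i by simp
          show ?thesis
          proof (cases "even i")
            case True
            obtain j where "i = Suc j" using i by (cases i) auto
            hence "i = Suc j" "odd j" using True by auto
            then show ?thesis using th' iN B by (simp add: p_def)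
          next
            case False
            obtain j where "i = Suc j" using i by (cases i) auto
            hence "i = Suc j" "even j" using False by auto
            then show ?thesis using th' iN B False by (simp add: p_def)
          qed
        qed
      qed
      have "sum_list th = real N / 2 * (a + b)" using th' lemE[OF assms(2)] by simp
      also have "a + b = 2 * w m" by (simp add: a_def b_def u_def)
      also have "real N / 2 * (2 * w m) = 2 * real_of_int m * pi" using Npos by (simp add: w_def)
      finally have sm: "sum_list th = 2 * real_of_int m * pi" .
      have "L \<le> \<lfloor>real N / 2\<rfloor>" unfolding L_def
      proof (rule floor_mono)
        have "real N / (2 * pi) * phi \<le> real N / (2 * pi) * (pi/2)"
          using phi Npos by (intro mult_left_mono) auto
        also have "\<dots> \<le> real N / 2" using Npos by (simp add: field_simps)
        finally show "real N / (2 * pi) * phi \<le> real N / 2" .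
      qed
      hence mb: "- \<lfloor>real N / 2\<rfloor> \<le> m \<and> m \<le> \<lfloor>real N / 2\<rfloor>" using mL by auto
      have "ring_equilibrium N K P th"
        unfolding ring_equilibrium_def using len eqs sm mb by blast
      moreover have "\<forall>x\<in>set th. - (pi / 2) \<le> x \<and> x \<le> pi / 2" using th' B by auto
      ultimately show "th \<in> stable_equilibria N K P" by (simp add: stable_equilibria_def)
    qed
  qed
  have "card (stable_equilibria N K P) = card {-L..L}" using S inj by (simp add: card_image)
  hence "int (card (stable_equilibria N K P)) = 1 + 2 * L" using L0 by simp
  moreover have "L = \<lfloor>real N / (2 * pi) * arccos (sqrt (P / (2 * K)))\<rfloor>"
    by (simp add: L_def phi_def y_def pk)
  ultimately show ?thesis using S by simp
qed

end
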